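(* Let $k\ge1$, $n=2^k-1$, and let $\mathbf{G}\in\mathbb{F}_2^{k\times n}$ be a generator matrix of the $[2^k-1,k,2^{k-1}]_2$ binary simplex code (its columns are all nonzero vectors of $\mathbb{F}_2^k$). Consider the storage system with files $f_1,\dots,f_k$ in which each file's recovery sets are all its recovery sets of size $1$ or $2$ and all servers have service rate $1$. Let $G$ be the graph representation of the code. Then $m(G)=\lambda^\star(\mathbf{G})=v(G)=2^{k-1}$.
   Context: Let $\mathbf{g}_1,\dots,\mathbf{g}_n$ be the columns of $\mathbf{G}$ and $\mathbf{e}_i$ the $i$-th unit vector. The recovery sets of size at most 2 for file $f_i$ are the sets $\{r\}$ with $\mathbf{g}_r=\mathbf{e}_i$ and $\{a,b\}$, $a\ne b$, with $\mathbf{g}_a+\mathbf{g}_b=\mathbf{e}_i$; list them as $R_{i,1},\dots,R_{i,t_i}$. The service rate region $\mathcal{S}(\mathbf{G})$ is the set of $\boldsymbol{\lambda}\in\mathbb{R}^k$ for which there exist real $\lambda_{i,j}\ge0$ with $\sum_j\lambda_{i,j}=\lambda_i$ for all $i$ and $\sum_{i}\sum_{j:\,l\in R_{i,j}}\lambda_{i,j}\le1$ for every server $l\in[n]$; the service capacity is $\lambda^\star(\mathbf{G})=\max\{\sum_i\lambda_i:\boldsymbol{\lambda}\in\mathcal{S}(\mathbf{G})\}$. The graph representation $G$ has vertex set $[n]$ plus one new dummy vertex per size-1 recovery set, and one edge per recovery set: $\{a,b\}$ gives an edge $ab$, $\{r\}$ gives an edge between $r$ and its dummy vertex. $m(G)$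 is the matching number (maximum number of pairwise non-adjacent edges) and $v(G)$ the vertex cover number (minimum number of vertices meeting all edges). *)

theory Defs
  imports "HOL-Analysis.Analysis" "HOL-Library.Z2"
begin

text \<open>Binary vectors in F_2^k are modelled as bit ^ 'k, with k = CARD('k).
  A generator matrix G with n columns is given by its column function
  g :: nat => bit ^ 'k on the server index set {..<n}.\<close>

definition simplex_generator :: "nat \<Rightarrow> (nat \<Rightarrow> bit ^ 'k::finite) \<Rightarrow> bool" where
  "simplex_generator n g \<longleftrightarrow> n = 2 ^ CARD('k) - 1 \<and> bij_betw g {..<n} (UNIV - {0})"

definition recovery_sets :: "nat \<Rightarrow> (nat \<Rightarrow> bit ^ 'k::finite) \<Rightarrow> 'k \<Rightarrow> nat set set" where
  "recovery_sets n g i =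
     {{r} | r. r < n \<and> g r = axis i 1} \<union>
     {{a, b} | a b. a < n \<and> b < n \<and> a \<noteq> b \<and> g a + g b = axis i 1}"

definition service_rate_region :: "nat \<Rightarrow> (nat \<Rightarrow> bit ^ 'k::finite) \<Rightarrow> ('k \<Rightarrow> real) set" where
  "service_rate_region n g =
     {lam. \<exists>lr :: 'k \<Rightarrow> nat set \<Rightarrow> real.
        (\<forall>i. \<forall>R\<in>recovery_sets n g i. lr i R \<ge> 0) \<and>
        (\<forall>i. (\<Sum>R\<in>recovery_sets n g i. lr i R) = lam i) \<and>
        (\<forall>l<n. (\<Sum>i\<in>UNIV. \<Sum>R\<in>{R\<in>recovery_sets n g i. l \<in> R}. lr i R) \<le> 1)}"

definition service_capacity :: "nat \<Rightarrow> (nat \<Rightarrow> bit ^ 'k::finite) \<Rightarrow> real" where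
  "service_capacity n g = Sup {(\<Sum>i\<in>UNIV. lam i) | lam. lam \<in> service_rate_region n g}"

text \<open>Graph representation: vertices are servers Inl l (l < n) plus one dummy
  vertex Inr (i, r) for each size-1 recovery set {r} of file i; one edge per
  recovery set.\<close>
definition graph_vertices :: "nat \<Rightarrow> (nat \<Rightarrow> bit ^ 'k::finite) \<Rightarrow> (nat + ('k \<times> nat)) set" where
  "graph_vertices n g = Inl ` {..<n} \<union> {Inr (i, r) | i r. {r} \<in> recovery_sets n g i}"

definition graph_edges :: "nat \<Rightarrow> (nat \<Rightarrow> bit ^ 'k::finite) \<Rightarrow> (nat + ('k \<times> nat)) set set" where
  "graph_edges n g =
     {{Inl r, Inr (i, r)} | i r. {r} \<in> recovery_sets n g i} \<union>
     {{Inl a, Inl b} | i a b. a \<noteq> b \<and> {a, b} \<in> recovery_sets n g i}"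

definition matching_number :: "'v set set \<Rightarrow> nat" where
  "matching_number E = Max {card M | M. M \<subseteq> E \<and>
      (\<forall>e\<in>M. \<forall>e'\<in>M. e \<noteq> e' \<longrightarrow> e \<inter> e' = {})}"

definition vertex_cover_number :: "'v set \<Rightarrow> 'v set set \<Rightarrow> nat" where
  "vertex_cover_number V E = Min {card C | C. C \<subseteq> V \<and> (\<forall>e\<in>E. e \<inter> C \<noteq> {})}"

end

theory Submission
  imports Defs
begin

definition par :: "bit ^ 'k::finite \<Rightarrow> bit" where "par v = (\<Sum>i\<in>UNIV. v $ i)"

lemma par_add: "par (v + w) = par v + par w"
  by (simp only: par_def vector_add_component sum.distrib)

lemma par_axis: "par (axis i (1::bit)) = 1"
  unfolding par_def axis_def by simp

lemma par_zero: "par 0 = 0"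
  by (simp add: par_def)

lemma bit_add_self: "(a::bit) + a = 0"
  by (cases a) simp_all

lemma vec_add_self: "(v::bit^'k::finite) + v = 0"
  by (simp add: vec_eq_iff bit_add_self)

lemma card_bit: "CARD(bit) = 2"
proof -
  have U: "(UNIV::bit set) = {0,1}" by (auto intro: bit.exhaust)
  have "card {0::bit,1} = 2" by simp
  then show ?thesis by (simp only: U)
qed

lemma card_odd: "card {v::bit^'k::finite. par v = 1} = 2^(CARD('k) - 1)"
proof -
  obtain j :: 'k where True by simp
  let ?e = "axis j (1::bit)"
  let ?O = "{v::bit^'k. par v = 1}"
  let ?E = "{v::bit^'k. par v = 0}"
  have bij: "bij_betw (\<lambda>v. v + ?e) ?O ?E"
    by (rule bij_betw_byWitness[where f'="\<lambda>v. v + ?e"])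
       (auto simp: par_add par_axis add.assoc vec_add_self bit_add_self)
  have cU: "CARD(bit^'k) = 2 ^ CARD('k)" by (simp add: card_bit)
  have fin: "finite (UNIV :: (bit^'k) set)"
    using cU by (metis card.infinite power_not_zero zero_neq_numeral)
  have "card ?O = card ?E" using bij_betw_same_card[OF bij] .
  moreover have "card ?O + card ?E = CARD(bit^'k)"
  proof -
    have "?O \<union> ?E = UNIV" by auto
    moreover have "?O \<inter> ?E = {}" by auto
    ultimately show ?thesis using card_Un_disjoint[of ?O ?E] fin
      by (metis finite_subset top_greatest)
  qed
  moreover have "CARD('k) \<ge> 1" by (simp add: Suc_le_eq)
  ultimately have "2 * card ?O = 2 ^ CARD('k)" using cU by simp
  moreover have "(2::nat) ^ CARD('k) = 2 * 2 ^ (CARD('k) - 1)"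
    using \<open>CARD('k) \<ge> 1\<close> by (metis Suc_diff_1 less_le_trans power_Suc zero_less_one)
  ultimately show ?thesis by simp
qed

lemma match_le_cover:
  assumes "finite Cv" "M \<subseteq> E" "\<forall>e\<in>M. \<forall>e'\<in>M. e \<noteq> e' \<longrightarrow> e \<inter> e' = {}"
    "\<forall>e\<in>E. e \<inter> Cv \<noteq> {}"
  shows "card M \<le> card Cv"
proof -
  define f where "f e = (SOME x. x \<in> e \<inter> Cv)" for e
  have f: "f e \<in> e \<inter> Cv" if "e \<in> M" for e
  proof -
    have "\<exists>x. x \<in> e \<inter> Cv" using assms(2,4) that by blast
    then show ?thesis unfolding f_def by (rule someI_ex)
  qed
  have "inj_on f M"
  proof (rule inj_onI)
    fix a b assume ab: "a \<in> M" "b \<in> M" "f a = f b"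
    then have "f a \<in> a \<inter> b" using f[of a] f[of b] by simp
    then show "a = b" using assms(3) ab(1,2) by blast
  qed
  moreover have "f ` M \<subseteq> Cv" using f by blast
  ultimately show ?thesis using card_inj_on_le assms(1) by blast
qed

lemma matching_number_eq:
  assumes fin: "finite Cv" and cov: "\<forall>e\<in>E. e \<inter> Cv \<noteq> {}" and ME: "M \<subseteq> E"
    and Md: "\<forall>x\<in>M. \<forall>y\<in>M. x \<noteq> y \<longrightarrow> x \<inter> y = {}" and cd: "card M = card Cv"
  shows "matching_number E = card Cv"
proof -
  define P where "P M' \<longleftrightarrow> M' \<subseteq> E \<and> (\<forall>e\<in>M'. \<forall>e'\<in>M'. e \<noteq> e' \<longrightarrow> e \<inter> e' = {})" for M'
  have A: "{card M' | M'. M' \<subseteq> E \<and> (\<forall>e\<in>M'. \<forall>e'\<in>M'. e \<noteq> e' \<longrightarrow> e \<inter> e' = {})}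
      = card ` {M'. P M'}" unfolding P_def by (rule setcompr_eq_image)
  have bnd: "card M' \<le> card Cv" if "P M'" for M'
    using match_le_cover[of Cv M' E] fin cov that unfolding P_def by blast
  have "Max (card ` {M'. P M'}) = card Cv"
  proof (rule Max_eqI)
    show "finite (card ` {M'. P M'})"
      by (rule finite_subset[of _ "{..card Cv}"]) (use bnd in auto)
    show "y \<le> card Cv" if "y \<in> card ` {M'. P M'}" for y using that bnd by auto
    have "P M" using ME Md unfolding P_def by simp
    then have "card M \<in> card ` {M'. P M'}" by blast
    then show "card Cv \<in> card ` {M'. P M'}" using cd by simp
  qed
  then show ?thesis unfolding matching_number_def A .
qed

lemma vertex_cover_number_eq:
  assumes fin: "finite V" and CV: "Cv \<subseteq> V" and cov: "\<forall>e\<in>E. e \<inter> Cv \<noteq> {}" and ME: "M \<subseteq> E"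
    and Md: "\<forall>x\<in>M. \<forall>y\<in>M. x \<noteq> y \<longrightarrow> x \<inter> y = {}" and cd: "card M = card Cv"
  shows "vertex_cover_number V E = card Cv"
proof -
  define P where "P C' \<longleftrightarrow> C' \<subseteq> V \<and> (\<forall>e\<in>E. e \<inter> C' \<noteq> {})" for C'
  have A: "{card C' | C'. C' \<subseteq> V \<and> (\<forall>e\<in>E. e \<inter> C' \<noteq> {})} = card ` {C'. P C'}"
    unfolding P_def by (rule setcompr_eq_image)
  have bnd: "card Cv \<le> card C'" if "P C'" for C'
  proof -
    have "finite C'" using that fin unfolding P_def by (metis finite_subset)
    then show ?thesis using match_le_cover[of C' M E] ME Md cd that unfolding P_def by simp
  qed
  have "Min (card ` {C'. P C'}) = card Cv"
  proof (rule Min_eqI)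
    show "finite (card ` {C'. P C'})"
    proof -
      have "{C'. P C'} \<subseteq> Pow V" unfolding P_def by auto
      then have "finite {C'. P C'}" using fin by (metis finite_Pow_iff finite_subset)
      then show ?thesis by simp
    qed
    show "card Cv \<le> y" if "y \<in> card ` {C'. P C'}" for y using that bnd by auto
    have "P Cv" using CV cov unfolding P_def by simp
    then show "card Cv \<in> card ` {C'. P C'}" by blast
  qed
  then show ?thesis unfolding vertex_cover_number_def A .
qed

theorem corollary2:
  fixes n :: nat and g :: "nat \<Rightarrow> bit ^ 'k::finite"
  assumes "simplex_generator n g"
  shows "real (matching_number (graph_edges n g)) = service_capacity n g \<and>
         service_capacity n g = real (vertex_cover_number (graph_vertices n g) (graph_edges n g)) \<and>
         vertex_cover_number (graph_vertices n g) (graph_edges n g) = 2 ^ (CARD('k) - 1)"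
proof -
  obtain j :: 'k where True by simp
  define e where "e = axis j (1::bit)"
  have enz: "e \<noteq> 0" unfolding e_def by simp
  have pe: "par e = 1" unfolding e_def by (rule par_axis)
  from assms have bij: "bij_betw g {..<n} (UNIV - {0})"
    by (auto simp: simplex_generator_def)
  define h where "h = inv_into {..<n} g"
  have gnz: "g l \<noteq> 0" if "l < n" for l using bij that by (auto simp: bij_betw_def)
  have ginj: "inj_on g {..<n}" using bij bij_betw_def by blast
  have hprop: "h v < n \<and> g (h v) = v" if "v \<noteq> 0" for v
  proof -
    have "v \<in> g ` {..<n}" using bij that by (auto simp: bij_betw_def)
    then show ?thesis unfolding h_def
      by (metis inv_into_into f_inv_into_f lessThan_iff)
  qed
  define C where "C = {l. l < n \<and> par (g l) = 1}"
  have finC: "finite C" unfolding C_def by simp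
  have cardC: "card C = 2 ^ (CARD('k) - 1)"
  proof -
    have "g ` C = {v. par v = 1}"
    proof
      show "g ` C \<subseteq> {v. par v = 1}" unfolding C_def by auto
      show "{v. par v = 1} \<subseteq> g ` C"
      proof
        fix v :: "bit^'k" assume "v \<in> {v. par v = 1}"
        then have "par v = 1" by simp
        have "v \<noteq> 0"
        proof
          assume "v = 0"
          then have "par v = 0" by (simp add: par_def)
          with \<open>par v = 1\<close> show False by simp
        qed
        then have "h v \<in> C" "g (h v) = v" using hprop \<open>par v = 1\<close> unfolding C_def by auto
        then show "v \<in> g ` C" by (metis imageI)
      qed
    qed
    moreover have "inj_on g C" using ginj unfolding C_def by (rule inj_on_subset) auto
    ultimately show ?thesis using card_odd card_image by metis
  qed
  define b where "b l = h (g l + e)" for l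
  define rs where "rs l = (if g l = e then {l} else {l, b l})" for l
  have sum0: "v = e" if "v + e = 0" for v :: "bit^'k"
  proof -
    have "v = v + e + e" by (simp add: add.assoc vec_add_self)
    then show ?thesis using that by simp
  qed
  have bprop: "b l < n \<and> g (b l) = g l + e \<and> b l \<noteq> l \<and> par (g (b l)) = 0 \<and> g l + g (b l) = e"
    if "l \<in> C" "g l \<noteq> e" for l
  proof -
    have "g l + e \<noteq> 0" using sum0 that by blast
    then have 1: "b l < n" "g (b l) = g l + e" using hprop unfolding b_def by auto
    moreover have "b l \<noteq> l" using 1 enz by (metis add_cancel_right_right)
    moreover have "par (g (b l)) = 0" using 1 that pe unfolding C_def
      by (simp add: par_add bit_add_self)
    moreover have "g l + g (b l) = e" using 1 by (simp add: add.assoc[symmetric] vec_add_self)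
    ultimately show ?thesis by blast
  qed
  have rs_rec: "rs l \<in> recovery_sets n g j" if "l \<in> C" for l
  proof (cases "g l = e")
    case True
    then show ?thesis using that unfolding rs_def recovery_sets_def C_def e_def by auto
  next
    case False
    have "l < n \<and> b l < n \<and> l \<noteq> b l \<and> g l + g (b l) = axis j 1"
      using bprop[OF that False] that unfolding C_def e_def by auto
    then have "{l, b l} \<in> {{a, b'} |a b'. a < n \<and> b' < n \<and> a \<noteq> b' \<and> g a + g b' = axis j 1}"
      by blast
    moreover have "rs l = {l, b l}" using False unfolding rs_def by simp
    ultimately show ?thesis unfolding recovery_sets_def by simp
  qed
  have rsC: "rs l \<inter> C = {l}" if "l \<in> C" for l
    using that bprop[OF that] unfolding rs_def C_def by auto
  have rs_disj: "rs l \<inter> rs l' = {}" if "l \<in> C" "l' \<in> C" "l \<noteq> l'" for l l'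
  proof (rule ccontr)
    assume "rs l \<inter> rs l' \<noteq> {}"
    then obtain x where x: "x \<in> rs l" "x \<in> rs l'" by blast
    show False
    proof (cases "x \<in> C")
      case True
      have "x \<in> rs l \<inter> C" "x \<in> rs l' \<inter> C" using x True by auto
      then have "x = l" "x = l'" using rsC[OF that(1)] rsC[OF that(2)] by auto
      then show False using that(3) by simp
    next
      case False
      then have "x \<noteq> l" "x \<noteq> l'" using that(1,2) by auto
      have xb: "g m \<noteq> e \<and> x = b m" if "x \<in> rs m" "x \<noteq> m" for m
      proof (cases "g m = e")
        case True
        then show ?thesis using that unfolding rs_def by simp
      next
        case False
        then show ?thesis using that unfolding rs_def by simp
      qed
      have gl: "g l \<noteq> e" "g l' \<noteq> e" "x = b l" "x = b l'"
        using xb[OF x(1) \<open>x \<noteq> l\<close>] xb[OF x(2) \<open>x \<noteq> l'\<close>] by auto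
      have "g x = g l + e" using bprop[OF that(1) gl(1)] gl(3) by simp
      moreover have "g x = g l' + e" using bprop[OF that(2) gl(2)] gl(4) by simp
      ultimately have "g l + e = g l' + e" by simp
      then have "g l = g l'" by simp
      moreover have "l \<in> {..<n}" "l' \<in> {..<n}" using that(1,2) unfolding C_def by auto
      ultimately have "l = l'" using ginj by (simp add: inj_on_eq_iff)
      then show False using that(3) by simp
    qed
  qed
  have rs_inj: "inj_on rs C"
  proof (rule inj_onI)
    fix l l' assume "l \<in> C" "l' \<in> C" "rs l = rs l'"
    then show "l = l'" using rsC by (metis singleton_inject)
  qed
  have rec_fin: "finite (recovery_sets n g i)" for i
  proof -
    have "recovery_sets n g i \<subseteq> Pow {..<n}" unfolding recovery_sets_def by auto
    then show ?thesis by (rule finite_subset) simp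
  qed
  have rec_meet: "R \<inter> C \<noteq> {}" if "R \<in> recovery_sets n g i" for R i
  proof -
    from that consider r where "R = {r}" "r < n" "g r = axis i 1"
      | a b' where "R = {a, b'}" "a < n" "b' < n" "g a + g b' = axis i 1"
      unfolding recovery_sets_def by blast
    then show ?thesis
    proof cases
      case 1
      then show ?thesis unfolding C_def by (simp add: par_axis)
    next
      case 2
      then have "par (g a) + par (g b') = 1" by (metis par_add par_axis)
      then have "par (g a) = 1 \<or> par (g b') = 1" by (cases "par (g a)") auto
      then show ?thesis using 2 unfolding C_def by auto
    qed
  qed
  have cap: "service_capacity n g = real (card C)"
  proof -
    define S where "S = {(\<Sum>i\<in>UNIV. lam i) | lam. lam \<in> service_rate_region n g}"
    have upper: "x \<le> real (card C)" if "x \<in> S" for x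
    proof -
      obtain lam lr where x: "x = (\<Sum>i\<in>UNIV. lam i)"
        and nn: "\<forall>i. \<forall>R\<in>recovery_sets n g i. lr i R \<ge> 0"
        and sm: "\<forall>i. (\<Sum>R\<in>recovery_sets n g i. lr i R) = lam i"
        and ld: "\<forall>l<n. (\<Sum>i\<in>UNIV. \<Sum>R\<in>{R\<in>recovery_sets n g i. l \<in> R}. lr i R) \<le> 1"
        using \<open>x \<in> S\<close> unfolding S_def service_rate_region_def by blast
      have "x = (\<Sum>i\<in>UNIV. \<Sum>R\<in>recovery_sets n g i. lr i R)" using x sm by simp
      also have "\<dots> \<le> (\<Sum>i\<in>UNIV. \<Sum>R\<in>recovery_sets n g i. \<Sum>l\<in>C. if l \<in> R then lr i R else 0)"
      proof (rule sum_mono, rule sum_mono)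
        fix i R assume R: "R \<in> recovery_sets n g i"
        have "(\<Sum>l\<in>C. if l \<in> R then lr i R else 0) = (\<Sum>l\<in>{l\<in>C. l \<in> R}. lr i R)"
          by (rule sum.inter_filter[OF finC, symmetric])
        also have "\<dots> = real (card {l\<in>C. l \<in> R}) * lr i R" by simp
        finally have eq: "(\<Sum>l\<in>C. if l \<in> R then lr i R else 0) = real (card {l\<in>C. l \<in> R}) * lr i R" .
        have "{l\<in>C. l \<in> R} \<noteq> {}" using rec_meet[OF R] by blast
        then have "card {l\<in>C. l \<in> R} \<ge> 1" using finC
          by (metis (no_types, lifting) One_nat_def Suc_leI card_gt_0_iff finite_subset mem_Collect_eq subsetI)
        moreover have "lr i R \<ge> 0" using nn R by blast
        ultimately have "lr i R \<le> real (card {l\<in>C. l \<in> R}) * lr i R"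
          by (metis mult_1 mult_right_mono of_nat_1 of_nat_mono)
        then show "lr i R \<le> (\<Sum>l\<in>C. if l \<in> R then lr i R else 0)" using eq by simp
      qed
      also have "\<dots> = (\<Sum>i\<in>UNIV. \<Sum>l\<in>C. \<Sum>R\<in>recovery_sets n g i. if l \<in> R then lr i R else 0)"
        by (rule sum.cong[OF refl], rule sum.swap)
      also have "\<dots> = (\<Sum>l\<in>C. \<Sum>i\<in>UNIV. \<Sum>R\<in>recovery_sets n g i. if l \<in> R then lr i R else 0)"
        by (rule sum.swap)
      also have "\<dots> = (\<Sum>l\<in>C. \<Sum>i\<in>UNIV. \<Sum>R\<in>{R\<in>recovery_sets n g i. l \<in> R}. lr i R)"
        by (simp add: sum.inter_filter rec_fin)
      also have "\<dots> \<le> (\<Sum>l\<in>C. 1)"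
        by (rule sum_mono) (use ld in \<open>auto simp: C_def\<close>)
      also have "\<dots> = real (card C)" by simp
      finally show ?thesis .
    qed
    have inS: "real (card C) \<in> S"
    proof -
      define lr where "lr i R = (if i = j \<and> R \<in> rs ` C then 1 else (0::real))" for i R
      define lam where "lam i = (if i = j then real (card C) else 0)" for i
      have sumlam: "(\<Sum>i\<in>UNIV. lam i) = real (card C)"
        unfolding lam_def by simp
      have recj: "{R\<in>recovery_sets n g j. R \<in> rs ` C} = rs ` C" using rs_rec by auto
      have "lam \<in> service_rate_region n g"
        unfolding service_rate_region_def
      proof (rule CollectI, rule exI[of _ lr], intro conjI allI impI ballI)
        fix i R show "0 \<le> lr i R" by (simp add: lr_def)
      next
        fix i
        show "(\<Sum>R\<in>recovery_sets n g i. lr i R) = lam i"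
        proof (cases "i = j")
          case True
          have "(\<Sum>R\<in>recovery_sets n g i. lr i R) = (\<Sum>R\<in>recovery_sets n g j. if R \<in> rs ` C then 1 else 0)"
            using True by (simp add: lr_def)
          also have "\<dots> = (\<Sum>R\<in>{R\<in>recovery_sets n g j. R \<in> rs ` C}. 1)"
            by (rule sum.inter_filter[OF rec_fin, symmetric])
          also have "\<dots> = real (card (rs ` C))" using recj by simp
          also have "\<dots> = real (card C)" using card_image[OF rs_inj] by simp
          finally show ?thesis using True by (simp add: lam_def)
        next
          case False
          then show ?thesis by (simp add: lr_def lam_def)
        qed
      next
        fix l assume "l < n"
        let ?G = "\<lambda>i. \<Sum>R\<in>{R\<in>recovery_sets n g i. l \<in> R}. lr i R"
 have G0: "(\<Sum>i\<in>UNIV - {j}. ?G i) = 0"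
          by (rule sum.neutral) (simp add: lr_def)
        have "(\<Sum>i\<in>UNIV. ?G i) = ?G j + (\<Sum>i\<in>UNIV - {j}. ?G i)"
          by (rule sum.remove) simp_all
        also have "\<dots> = ?G j" using G0 by simp
        also have "\<dots> = (\<Sum>R\<in>{R\<in>recovery_sets n g j. l \<in> R}. if R \<in> rs ` C then 1 else 0)"
          by (simp add: lr_def)
        also have "\<dots> = (\<Sum>R\<in>{R\<in>{R\<in>recovery_sets n g j. l \<in> R}. R \<in> rs ` C}. 1)"
          by (rule sum.inter_filter[symmetric]) (simp add: rec_fin)
        also have "\<dots> = real (card {R\<in>{R\<in>recovery_sets n g j. l \<in> R}. R \<in> rs ` C})" by simp
        also have "\<dots> \<le> 1"
        proof -
          let ?A = "{R\<in>{R\<in>recovery_sets n g j. l \<in> R}. R \<in> rs ` C}"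
          have "finite ?A" using rec_fin[of j] by simp
          moreover have "\<forall>R1\<in>?A. \<forall>R2\<in>?A. R1 = R2"
          proof (intro ballI)
            fix R1 R2 assume "R1 \<in> ?A" "R2 \<in> ?A"
            then obtain l1 l2 where "l1 \<in> C" "l2 \<in> C" "R1 = rs l1" "R2 = rs l2" "l \<in> rs l1" "l \<in> rs l2"
              by blast
            then show "R1 = R2" using rs_disj[of l1 l2] by (cases "l1 = l2") auto
          qed
          ultimately have "card ?A \<le> Suc 0" using card_le_Suc0_iff_eq by blast
          then show ?thesis by simp
        qed
        finally show "(\<Sum>i\<in>UNIV. ?G i) \<le> 1" .
      qed
      then show ?thesis unfolding S_def using sumlam
        by (intro CollectI exI[of _ lam] conjI) simp_all
    qed
    show ?thesis unfolding service_capacity_def S_def[symmetric]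
      by (rule cSup_eq_maximum[OF inS upper])
  qed
  have rec_sub: "R \<subseteq> {..<n}" if "R \<in> recovery_sets n g i" for R i
    using that unfolding recovery_sets_def by auto
  define E where "E = graph_edges n g"
  define V where "V = graph_vertices n g"
  define edge :: "nat \<Rightarrow> (nat + ('k \<times> nat)) set"
    where "edge l = (if g l = e then {Inl l, Inr (j, l)} else {Inl l, Inl (b l)})" for l
  have edge_E: "edge l \<in> E" if "l \<in> C" for l
  proof (cases "g l = e")
    case True
    then have "{l} \<in> recovery_sets n g j" using rs_rec[OF that] unfolding rs_def by simp
    then have "{Inl l, Inr (j, l)} \<in> {{Inl r, Inr (i, r)} | i r. {r} \<in> recovery_sets n g i}"
      by blast
    moreover have "edge l = {Inl l, Inr (j, l)}" using True unfolding edge_def by simp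
    ultimately show ?thesis unfolding E_def graph_edges_def by (simp only:) (rule UnI1)
  next
    case False
    then have "{l, b l} \<in> recovery_sets n g j" using rs_rec[OF that] unfolding rs_def by simp
    moreover have "l \<noteq> b l" using bprop[OF that False] by simp
    ultimately have "{Inl l, Inl (b l)} \<in> {{Inl a, Inl b'} | i a b'. a \<noteq> b' \<and> {a, b'} \<in> recovery_sets n g i}"
      by blast
    moreover have "edge l = {Inl l, Inl (b l)}" using False unfolding edge_def by simp
    ultimately show ?thesis unfolding E_def graph_edges_def by (simp only:) (rule UnI2)
  qed
  have edge_Inl: "x \<in> rs l" if "Inl x \<in> edge l" for x l
    using that unfolding edge_def rs_def by (auto split: if_splits)
  have edge_Inr: "p = (j, l)" if "Inr p \<in> edge l" for p l
    using that unfolding edge_def by (auto split: if_splits)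
  have edge_l: "Inl l \<in> edge l" for l unfolding edge_def by simp
  have edge_disj: "edge l \<inter> edge l' = {}" if "l \<in> C" "l' \<in> C" "l \<noteq> l'" for l l'
  proof (rule ccontr)
    assume "edge l \<inter> edge l' \<noteq> {}"
    then obtain y where y: "y \<in> edge l" "y \<in> edge l'" by blast
    show False
    proof (cases y)
      case (Inl x)
      then have "x \<in> rs l \<inter> rs l'" using y edge_Inl by blast
      then show False using rs_disj[OF that] by blast
    next
      case (Inr p)
      then have "p = (j, l)" "p = (j, l')" using y edge_Inr by blast+
      then show False using that(3) by simp
    qed
  qed
  have edge_inj: "inj_on edge C"
  proof (rule inj_onI)
    fix l l' assume "l \<in> C" "l' \<in> C" "edge l = edge l'"
    then show "l = l'" using edge_disj[of l l'] edge_l[of l] by blast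
  qed
  define M where "M = edge ` C"
  have cardM: "card M = card C" unfolding M_def using card_image[OF edge_inj] .
  have ME: "M \<subseteq> E" unfolding M_def using edge_E by blast
  have Mdisj: "\<forall>x\<in>M. \<forall>y\<in>M. x \<noteq> y \<longrightarrow> x \<inter> y = {}"
    unfolding M_def using edge_disj by blast
  define Cov where "Cov = (Inl ` C :: (nat + ('k \<times> nat)) set)"
  have cardCov: "card Cov = card C" unfolding Cov_def by (simp add: card_image)
  have CovV: "Cov \<subseteq> V" unfolding Cov_def V_def graph_vertices_def C_def by auto
  have finV: "finite V"
  proof -
    have "V \<subseteq> Inl ` {..<n} \<union> Inr ` (UNIV \<times> {..<n})"
    proof
      fix y assume "y \<in> V"
      then consider "y \<in> Inl ` {..<n}" | i r where "y = Inr (i, r)" "{r} \<in> recovery_sets n g i"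
        unfolding V_def graph_vertices_def by blast
      then show "y \<in> Inl ` {..<n} \<union> Inr ` (UNIV \<times> {..<n})"
      proof cases
        case 1 then show ?thesis by blast
      next
        case 2 then show ?thesis using rec_sub[OF 2(2)] by auto
      qed
    qed
    then show ?thesis by (rule finite_subset) simp
  qed
  have Cov_cov: "\<forall>ed\<in>E. ed \<inter> Cov \<noteq> {}"
  proof
    fix ed assume "ed \<in> E"
    then consider i r where "ed = {Inl r, Inr (i, r)}" "{r} \<in> recovery_sets n g i"
      | i a b' where "ed = {Inl a, Inl b'}" "{a, b'} \<in> recovery_sets n g i"
      unfolding E_def graph_edges_def by blast
    then show "ed \<inter> Cov \<noteq> {}"
    proof cases
      case 1
      then have "r \<in> C" using rec_meet[OF 1(2)] by blast
      then show ?thesis using 1 unfolding Cov_def by blast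
    next
      case 2
      then have "a \<in> C \<or> b' \<in> C" using rec_meet[OF 2(2)] by blast
      then show ?thesis using 2 unfolding Cov_def by blast
    qed
  qed
  have mat: "matching_number (graph_edges n g) = card C"
    using matching_number_eq[OF finite_subset[OF CovV finV] Cov_cov ME Mdisj] cardM cardCov
    unfolding E_def by simp
  have cov: "vertex_cover_number (graph_vertices n g) (graph_edges n g) = card C"
    using vertex_cover_number_eq[OF finV CovV Cov_cov ME Mdisj] cardM cardCov
    unfolding E_def V_def by simp
  show ?thesis using cap mat cov cardC by simp
qed

end
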